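(* Let $V\in C^\infty(\mathbb{R})$ be real-valued, let $D=\frac{d}{dx}$, let $L=D^2+V(x)$, and let $N\ge 0$ be an integer. The following are equivalent: (i) there exists a linear differential operator $Q=D^{2N+1}+\sum_{j=0}^{2N} q_j(x)D^j$ with $q_j\in C^\infty(\mathbb{R})$ such that $[Q,L]=0$; (ii) there exist functions $a_0,\dots,a_N,b_0,\dots,b_N\in C^\infty(\mathbb{R})$ with $a_N\equiv 1$, and a function $r(x,\varepsilon)$, such that for every real $\varepsilon$ the first-order operator $$\hat Q_\varepsilon=\Big(\sum_{j=0}^N a_j(x)\varepsilon^j\Big)D+\sum_{j=0}^N b_j(x)\varepsilon^j$$ is a Lie symmetry of the equation $(L+\varepsilon)\psi=0$, i.e. $[L+\varepsilon,\hat Q_\varepsilon]=r(x,\varepsilon)\,(L+\varepsilon)$ as differential operators.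
   Context: Sign convention: the paper writes its Hamiltonian as $H=-\frac{d^2}{dx^2}+V$, but its determining equations and recursion operators match the operator $L=\frac{d^2}{dx^2}+V$ (equivalently $H=-\frac{d^2}{dx^2}-V$); the statement is given in that consistent convention. A differential operator $\hat Q$ is a (Lie) symmetry of $A\psi=0$ if $[A,\hat Q]=PA$ for some differential operator $P$; for first-order $\hat Q$ and second-order $A=L+\varepsilon$, $P$ is multiplication by a function $r$. *)

theory Defs
  imports "HOL-Analysis.Analysis"
begin

definition smooth :: "(real \<Rightarrow> real) \<Rightarrow> bool" where
  "smooth f \<longleftrightarrow> (\<forall>k x. ((deriv ^^ k) f) differentiable (at x))"

definition Dn :: "nat \<Rightarrow> (real \<Rightarrow> real) \<Rightarrow> real \<Rightarrow> real" where
  "Dn k f = (deriv ^^ k) f"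

definition schrL :: "(real \<Rightarrow> real) \<Rightarrow> (real \<Rightarrow> real) \<Rightarrow> real \<Rightarrow> real" where
  "schrL V \<psi> = (\<lambda>x. Dn 2 \<psi> x + V x * \<psi> x)"

definition opQ :: "nat \<Rightarrow> (nat \<Rightarrow> real \<Rightarrow> real) \<Rightarrow> (real \<Rightarrow> real) \<Rightarrow> real \<Rightarrow> real" where
  "opQ N q \<psi> = (\<lambda>x. Dn (2*N+1) \<psi> x + (\<Sum>j\<le>2*N. q j x * Dn j \<psi> x))"

definition opQhat :: "nat \<Rightarrow> (nat \<Rightarrow> real \<Rightarrow> real) \<Rightarrow> (nat \<Rightarrow> real \<Rightarrow> real) \<Rightarrow> real
    \<Rightarrow> (real \<Rightarrow> real) \<Rightarrow> real \<Rightarrow> real" where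
  "opQhat N a b \<epsilon> \<psi> = (\<lambda>x. (\<Sum>j\<le>N. a j x * \<epsilon>^j) * deriv \<psi> x + (\<Sum>j\<le>N. b j x * \<epsilon>^j) * \<psi> x)"

end

theory Submission
  imports Defs
begin

lemma smooth_iff: "smooth f \<longleftrightarrow> (\<forall>x. f differentiable at x) \<and> smooth (deriv f)"
  unfolding smooth_def
proof safe
  fix k x assume "\<forall>k x. (deriv ^^ k) f differentiable at x"
  then show "(deriv ^^ k) (deriv f) differentiable at x"
    by (metis funpow_Suc_right o_apply)
next
  fix x assume "\<forall>k x. (deriv ^^ k) f differentiable at x"
  then show "f differentiable at x" by (metis funpow_0)
next
  fix k x assume "\<forall>x. f differentiable at x" "\<forall>k x. (deriv ^^ k) (deriv f) differentiable at x"
  then show "(deriv ^^ k) f differentiable at x"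
    by (cases k) (auto simp del: funpow.simps simp: funpow_Suc_right)
qed

lemma smooth_coinduct:
  assumes "P f" and step: "\<And>g. P g \<Longrightarrow> (\<forall>x. g differentiable at x) \<and> P (deriv g)"
  shows "smooth f"
proof -
  have "\<forall>g. P g \<longrightarrow> (\<forall>x. (deriv ^^ k) g differentiable at x)" for k
  proof (induction k)
    case 0 then show ?case using step by simp
  next
    case (Suc k) then show ?case using step
      by (auto simp del: funpow.simps simp: funpow_Suc_right)
  qed
  then show ?thesis using assms(1) unfolding smooth_def by blast
qed

lemma smooth_diff: "smooth f \<Longrightarrow> f differentiable at x"
  using smooth_iff by blast

lemma smooth_fd: "smooth f \<Longrightarrow> f field_differentiable at x"
  by (metis smooth_diff DERIV_deriv_iff_real_differentiable DERIV_deriv_iff_field_differentiable)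

lemma smooth_DERIV: "smooth f \<Longrightarrow> (f has_real_derivative deriv f x) (at x)"
  using smooth_diff DERIV_deriv_iff_real_differentiable by blast

lemma smooth_deriv: "smooth f \<Longrightarrow> smooth (deriv f)"
  using smooth_iff by blast

definition psf :: "((real \<Rightarrow> real) \<times> (real \<Rightarrow> real)) list \<Rightarrow> real \<Rightarrow> real" where
  "psf ps = (\<lambda>x. \<Sum>(f,g)\<leftarrow>ps. f x * g x)"

definition dps :: "((real \<Rightarrow> real) \<times> (real \<Rightarrow> real)) list \<Rightarrow> ((real \<Rightarrow> real) \<times> (real \<Rightarrow> real)) list" where
  "dps ps = concat (map (\<lambda>(f,g). [(deriv f, g), (f, deriv g)]) ps)"

lemma psf_DERIV:
  assumes "\<forall>(f,g)\<in>set ps. smooth f \<and> smooth g"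
  shows "(psf ps has_real_derivative psf (dps ps) x) (at x)"
  using assms
proof (induction ps)
  case Nil then show ?case by (simp add: psf_def dps_def)
next
  case (Cons p ps)
  obtain f g where p: "p = (f,g)" by force
  have sm: "smooth f" "smooth g" using Cons.prems p by auto
  have IH: "(psf ps has_real_derivative psf (dps ps) x) (at x)" using Cons by auto
  have e1: "psf (p # ps) = (\<lambda>x. f x * g x + psf ps x)" by (simp add: psf_def p)
  have e2: "psf (dps (p # ps)) x = deriv f x * g x + f x * deriv g x + psf (dps ps) x"
    by (simp add: psf_def dps_def p)
  show ?case unfolding e1 e2
    by (auto intro!: derivative_eq_intros smooth_DERIV sm IH)
qed

lemma smooth_psf:
  assumes "\<forall>(f,g)\<in>set ps. smooth f \<and> smooth g"
  shows "smooth (psf ps)"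
proof (rule smooth_coinduct[where P="\<lambda>h. \<exists>ps. (\<forall>(f,g)\<in>set ps. smooth f \<and> smooth g) \<and> h = psf ps"])
  show "\<exists>ps'. (\<forall>(f,g)\<in>set ps'. smooth f \<and> smooth g) \<and> psf ps = psf ps'" using assms by blast
next
  fix h assume "\<exists>ps. (\<forall>(f,g)\<in>set ps. smooth f \<and> smooth g) \<and> h = psf ps"
  then obtain ps where ps: "\<forall>(f,g)\<in>set ps. smooth f \<and> smooth g" "h = psf ps" by blast
  have D: "\<And>x. (psf ps has_real_derivative psf (dps ps) x) (at x)" using psf_DERIV ps(1) by blast
  have "\<forall>x. h differentiable at x" using D ps(2) real_differentiable_def by blast
  moreover have "deriv h = psf (dps ps)" using D ps(2) DERIV_imp_deriv by blast
  moreover have "\<forall>(f,g)\<in>set (dps ps). smooth f \<and> smooth g"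
    using ps(1) by (auto simp: dps_def smooth_deriv)
  ultimately show "(\<forall>x. h differentiable at x) \<and> (\<exists>ps. (\<forall>(f,g)\<in>set ps. smooth f \<and> smooth g) \<and> deriv h = psf ps)"
    by blast
qed

lemma smooth_const[simp]: "smooth (\<lambda>x. c)"
  by (rule smooth_coinduct[where P="\<lambda>h. \<exists>c. h = (\<lambda>x. c)"]) auto

lemma smooth_mult[intro]: "smooth f \<Longrightarrow> smooth g \<Longrightarrow> smooth (\<lambda>x. f x * g x)"
  using smooth_psf[of "[(f,g)]"] by (simp add: psf_def)

lemma smooth_add[intro]: "smooth f \<Longrightarrow> smooth g \<Longrightarrow> smooth (\<lambda>x. f x + g x)"
  using smooth_psf[of "[(f,\<lambda>x. 1),(g,\<lambda>x. 1)]"] by (simp add: psf_def)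

lemma smooth_cmult[intro]: "smooth f \<Longrightarrow> smooth (\<lambda>x. c * f x)"
  using smooth_mult[of "\<lambda>x. c" f] by simp

lemma smooth_minus[intro]: "smooth f \<Longrightarrow> smooth (\<lambda>x. - f x)"
  using smooth_cmult[of f "-1"] by simp

lemma smooth_diffr[intro]: "smooth f \<Longrightarrow> smooth g \<Longrightarrow> smooth (\<lambda>x. f x - g x)"
  using smooth_add[of f "\<lambda>x. - g x"] by auto

lemma smooth_sum[intro]: "(\<And>i. i \<in> S \<Longrightarrow> smooth (f i)) \<Longrightarrow> smooth (\<lambda>x. \<Sum>i\<in>S. f i x)"
proof (induction S rule: infinite_finite_induct)
  case (insert a F) then show ?case
    by (simp add: smooth_add)
qed auto

lemma smooth_id[simp]: "smooth (\<lambda>x. x)"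
  by (rule smooth_coinduct[where P="\<lambda>h. h = (\<lambda>x. x) \<or> (\<exists>c. h = (\<lambda>x. c))"]) auto

lemma smooth_Dn[intro]: "smooth f \<Longrightarrow> smooth (Dn k f)"
  by (induction k) (auto simp: Dn_def smooth_deriv)

lemma Dn_Suc: "Dn (Suc k) f = deriv (Dn k f)"
  by (simp add: Dn_def)

lemma Dn_Suc': "Dn (Suc k) f = Dn k (deriv f)"
  by (simp add: Dn_def funpow_Suc_right del: funpow.simps)

lemma Dn_0[simp]: "Dn 0 f = f" by (simp add: Dn_def)

lemma Dn_2: "Dn 2 f = deriv (deriv f)"
  by (simp add: Dn_def numeral_2_eq_2)


lemmas sm_simps = smooth_fd smooth_mult smooth_add smooth_deriv smooth_cmult smooth_minus smooth_diffr smooth_Dn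

lemma key_identity:
  assumes sa: "smooth a" and sb: "smooth b" and sp: "smooth \<phi>" and sV: "smooth V"
  shows "schrL V (\<lambda>x. a x * \<phi> x + b x * deriv \<phi> x) x - (a x * schrL V \<phi> x + b x * deriv (schrL V \<phi>) x)
    = 2 * deriv b x * schrL V \<phi> x + (deriv (deriv b) x + 2 * deriv a x) * deriv \<phi> x
      + (deriv (deriv a) x - b x * deriv V x - 2 * deriv b x * V x) * \<phi> x"
proof -
  note ss = sm_simps sa sb sp sV
  have d1: "deriv (\<lambda>x. a x * \<phi> x + b x * deriv \<phi> x) = (\<lambda>x. a x * deriv \<phi> x + deriv a x * \<phi> x + (b x * deriv (deriv \<phi>) x + deriv b x * deriv \<phi> x))"
    by (rule ext) (simp add: ss)
  have d2: "deriv (deriv (\<lambda>x. a x * \<phi> x + b x * deriv \<phi> x)) x =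
     a x * deriv (deriv \<phi>) x + deriv a x * deriv \<phi> x + (deriv a x * deriv \<phi> x + deriv (deriv a) x * \<phi> x)
     + (b x * deriv (deriv (deriv \<phi>)) x + deriv b x * deriv (deriv \<phi>) x + (deriv b x * deriv (deriv \<phi>) x + deriv (deriv b) x * deriv \<phi> x))"
    unfolding d1 by (simp add: ss)
  have d3: "deriv (schrL V \<phi>) x = deriv (deriv (deriv \<phi>)) x + (V x * deriv \<phi> x + deriv V x * \<phi> x)"
    unfolding schrL_def Dn_2 by (simp add: ss)
  show ?thesis
    unfolding d3 by (subst schrL_def, subst Dn_2, simp only: d2) (simp add: schrL_def Dn_2 algebra_simps)
qed


definition repr :: "nat \<Rightarrow> (nat \<Rightarrow> real \<Rightarrow> real) \<Rightarrow> ((real \<Rightarrow> real) \<Rightarrow> real \<Rightarrow> real) \<Rightarrow> bool" where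
  "repr n c T \<longleftrightarrow> (\<forall>i. smooth (c i)) \<and> (\<forall>i>n. c i = (\<lambda>_. 0)) \<and>
     (\<forall>\<psi>. smooth \<psi> \<longrightarrow> T \<psi> = (\<lambda>x. \<Sum>i\<le>n. c i x * Dn i \<psi> x))"

lemma repr_ext: "repr n c T \<Longrightarrow> (\<And>\<psi>. smooth \<psi> \<Longrightarrow> S \<psi> = T \<psi>) \<Longrightarrow> repr n c S"
  unfolding repr_def by auto

lemma repr_above: "repr n c T \<Longrightarrow> n < i \<Longrightarrow> c i = (\<lambda>_. 0)"
  unfolding repr_def by auto

lemma repr_eq: "repr n c T \<Longrightarrow> smooth \<psi> \<Longrightarrow> T \<psi> x = (\<Sum>i\<le>n. c i x * Dn i \<psi> x)"
  unfolding repr_def by auto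

lemma repr_sm: "repr n c T \<Longrightarrow> smooth (c i)"
  unfolding repr_def by auto

lemma repr_smooth: "repr n c T \<Longrightarrow> smooth \<psi> \<Longrightarrow> smooth (T \<psi>)"
  unfolding repr_def by (auto intro!: smooth_sum smooth_mult smooth_Dn)

lemma repr_mono:
  assumes "repr n c T" "n \<le> m" shows "repr m c T"
proof -
  have "(\<Sum>i\<le>m. c i x * Dn i \<psi> x) = (\<Sum>i\<le>n. c i x * Dn i \<psi> x)" for \<psi> x
    using assms by (intro sum.mono_neutral_right) (auto simp: repr_def)
  then show ?thesis using assms unfolding repr_def by auto
qed

lemma repr_id: "repr 0 (\<lambda>i. if i = 0 then (\<lambda>x. 1) else (\<lambda>x. 0)) (\<lambda>\<psi>. \<psi>)"
  unfolding repr_def by auto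

lemma repr_mult:
  assumes "repr n c T" "smooth f"
  shows "repr n (\<lambda>i x. f x * c i x) (\<lambda>\<psi> x. f x * T \<psi> x)"
  using assms unfolding repr_def by (auto simp: sum_distrib_left mult.assoc)

lemma repr_cmult:
  assumes "repr n c T"
  shows "repr n (\<lambda>i x. s * c i x) (\<lambda>\<psi> x. s * T \<psi> x)"
  using repr_mult[OF assms, of "\<lambda>x. s"] by simp

lemma repr_add:
  assumes "repr n c T" "repr n d S"
  shows "repr n (\<lambda>i x. c i x + d i x) (\<lambda>\<psi> x. T \<psi> x + S \<psi> x)"
  using assms unfolding repr_def by (auto simp: sum.distrib distrib_right)

lemma repr_D:
  assumes r: "repr n c T"
  shows "repr (Suc n) (\<lambda>i x. deriv (c i) x + (case i of 0 \<Rightarrow> 0 | Suc j \<Rightarrow> c j x)) (\<lambda>\<psi>. deriv (T \<psi>))"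
proof -
  have sc: "smooth (c i)" for i using r repr_sm by blast
  have z: "c i = (\<lambda>_. 0)" if "n < i" for i using r repr_above that by blast
  have sm: "smooth (\<lambda>x. deriv (c i) x + (case i of 0 \<Rightarrow> 0 | Suc j \<Rightarrow> c j x))" for i
    by (cases i) (auto intro!: smooth_add smooth_deriv sc simp del: One_nat_def)
  have ab: "(\<lambda>x. deriv (c i) x + (case i of 0 \<Rightarrow> 0 | Suc j \<Rightarrow> c j x)) = (\<lambda>_. 0)" if lt: "Suc n < i" for i
  proof -
    obtain j where "i = Suc j" "n < j" using lt by (cases i) auto
    then show ?thesis using z[of i] z[of j] lt by auto
  qed
  have eq: "deriv (T \<psi>) x = (\<Sum>i\<le>Suc n. (deriv (c i) x + (case i of 0 \<Rightarrow> 0 | Suc j \<Rightarrow> c j x)) * Dn i \<psi> x)"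
    if sp: "smooth \<psi>" for \<psi> x
  proof -
    have "T \<psi> = (\<lambda>x. \<Sum>i\<le>n. c i x * Dn i \<psi> x)" using r sp unfolding repr_def by auto
    then have "deriv (T \<psi>) x = (\<Sum>i\<le>n. c i x * Dn (Suc i) \<psi> x + deriv (c i) x * Dn i \<psi> x)"
      by (simp add: sm_simps sc sp Dn_Suc)
    also have "\<dots> = (\<Sum>i\<le>n. c i x * Dn (Suc i) \<psi> x) + (\<Sum>i\<le>n. deriv (c i) x * Dn i \<psi> x)"
      by (simp add: sum.distrib)
    also have "(\<Sum>i\<le>n. deriv (c i) x * Dn i \<psi> x) = (\<Sum>i\<le>Suc n. deriv (c i) x * Dn i \<psi> x)"
      using z[of "Suc n"] by simp
    also have "(\<Sum>i\<le>n. c i x * Dn (Suc i) \<psi> x) = (\<Sum>i\<le>Suc n. (case i of 0 \<Rightarrow> 0 | Suc j \<Rightarrow> c j x) * Dn i \<psi> x)"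
      by (subst sum.atMost_Suc_shift) simp
    finally show ?thesis by (simp add: sum.distrib distrib_right)
  qed
  show ?thesis unfolding repr_def using sm ab eq by auto
qed

lemma repr_D_top:
  assumes "repr n c T"
  shows "(\<lambda>x. deriv (c (Suc n)) x + (case Suc n of 0 \<Rightarrow> 0 | Suc j \<Rightarrow> c j x)) = c n"
  using repr_above[OF assms, of "Suc n"] by simp

lemma Dn_cmult: "smooth \<phi> \<Longrightarrow> Dn k (\<lambda>x. s * \<phi> x) = (\<lambda>x. s * Dn k \<phi> x)"
proof (induction k)
  case (Suc k) then show ?case by (simp add: Dn_Suc sm_simps)
qed simp

lemma repr_lin:
  assumes "repr n c T" "smooth \<phi>"
  shows "T (\<lambda>x. s * \<phi> x) = (\<lambda>x. s * T \<phi> x)"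
proof -
  have "smooth (\<lambda>x. s * \<phi> x)" using assms by auto
  then show ?thesis using assms unfolding repr_def
    by (auto simp: Dn_cmult sum_distrib_left algebra_simps)
qed

lemma repr_neg:
  assumes "repr n c T" "smooth \<phi>"
  shows "T (\<lambda>x. - \<phi> x) = (\<lambda>x. - T \<phi> x)"
  using repr_lin[OF assms, of "-1"] by simp

definition nL :: "(real \<Rightarrow> real) \<Rightarrow> (real \<Rightarrow> real) \<Rightarrow> real \<Rightarrow> real" where
  "nL V \<psi> = (\<lambda>x. - (Dn 2 \<psi> x + V x * \<psi> x))"

definition P :: "(real \<Rightarrow> real) \<Rightarrow> nat \<Rightarrow> (real \<Rightarrow> real) \<Rightarrow> real \<Rightarrow> real" where
  "P V k = (nL V ^^ k)"

lemma repr_nL: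
  assumes sV: "smooth V" and r: "repr n c T"
  shows "\<exists>d. repr (Suc (Suc n)) d (\<lambda>\<psi>. nL V (T \<psi>)) \<and> d (Suc (Suc n)) = (\<lambda>x. - c n x)"
proof -
  note r1 = repr_D[OF r]
  note r2 = repr_D[OF r1]
  have t2: "(\<lambda>x. deriv (\<lambda>x. deriv (c (Suc (Suc n))) x + (case Suc (Suc n) of 0 \<Rightarrow> 0 | Suc j \<Rightarrow> c j x)) x +
           (case Suc (Suc n) of 0 \<Rightarrow> 0 | Suc j \<Rightarrow> deriv (c j) x + (case j of 0 \<Rightarrow> 0 | Suc j \<Rightarrow> c j x))) = c n"
    using repr_above[OF r, of "Suc n"] repr_above[OF r, of "Suc (Suc n)"] by simp
  have r3: "repr (Suc (Suc n)) (\<lambda>i x. V x * c i x) (\<lambda>\<psi> x. V x * T \<psi> x)"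
    by (rule repr_mono[OF repr_mult[OF r sV]]) simp
  have t3: "(\<lambda>x. V x * c (Suc (Suc n)) x) = (\<lambda>_. 0)" using repr_above[OF r, of "Suc (Suc n)"] by simp
  note r4 = repr_cmult[OF repr_add[OF r2 r3], of "-1"]
  show ?thesis
    apply (rule exI, rule conjI, rule repr_ext[OF r4])
     apply (simp add: nL_def Dn_2)
    using repr_above[OF r, of "Suc n"] repr_above[OF r, of "Suc (Suc n)"] by auto
qed

lemma repr_P:
  assumes sV: "smooth V"
  shows "\<exists>c. repr (2*k) c (P V k) \<and> c (2*k) = (\<lambda>x. (-1)^k)"
proof (induction k)
  case 0 then show ?case using repr_id by (auto simp: P_def)
next
  case (Suc k)
  then obtain c where c: "repr (2*k) c (P V k)" "c (2*k) = (\<lambda>x. (-1)^k)" by blast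
  obtain d where d: "repr (Suc (Suc (2*k))) d (\<lambda>\<psi>. nL V (P V k \<psi>))" "d (Suc (Suc (2*k))) = (\<lambda>x. - c (2*k) x)"
    using repr_nL[OF sV c(1)] by blast
  have "P V (Suc k) = (\<lambda>\<psi>. nL V (P V k \<psi>))" by (rule ext) (simp add: P_def)
  then show ?case using d c(2) by (auto intro!: exI[of _ d])
qed

lemma P_smooth: "smooth V \<Longrightarrow> smooth \<psi> \<Longrightarrow> smooth (P V k \<psi>)"
  using repr_P repr_smooth by blast

lemma repr_DP:
  assumes sV: "smooth V"
  shows "\<exists>c. repr (Suc (2*k)) c (\<lambda>\<psi>. deriv (P V k \<psi>)) \<and> c (Suc (2*k)) = (\<lambda>x. (-1)^k)"
proof -
  obtain c where c: "repr (2*k) c (P V k)" "c (2*k) = (\<lambda>x. (-1)^k)" using repr_P[OF sV] by blast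
  show ?thesis using repr_D[OF c(1)] repr_D_top[OF c(1)] c(2) by auto
qed

definition DO :: "(real \<Rightarrow> real) \<Rightarrow> nat \<Rightarrow> (nat \<Rightarrow> real \<Rightarrow> real) \<Rightarrow> (nat \<Rightarrow> real \<Rightarrow> real) \<Rightarrow> (real \<Rightarrow> real) \<Rightarrow> real \<Rightarrow> real" where
  "DO V M a b \<psi> = (\<lambda>x. \<Sum>k\<le>M. a k x * P V k \<psi> x + b k x * deriv (P V k \<psi>) x)"

lemma repr_DO:
  assumes sV: "smooth V" and sa: "\<And>k. smooth (a k)" and sb: "\<And>k. smooth (b k)"
  shows "\<exists>c. repr (Suc (2*M)) c (DO V M a b) \<and> c (Suc (2*M)) = (\<lambda>x. (-1)^M * b M x)"
proof (induction M)
  case 0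
  obtain c where c: "repr 0 c (P V 0)" "c 0 = (\<lambda>x. 1)" using repr_P[OF sV, of 0] by auto
  obtain d where d: "repr 1 d (\<lambda>\<psi>. deriv (P V 0 \<psi>))" "d 1 = (\<lambda>x. 1)" using repr_DP[OF sV, of 0] by auto
  note r = repr_add[OF repr_mono[OF repr_mult[OF c(1) sa[of 0]], of 1] repr_mult[OF d(1) sb[of 0]]]
  have "repr 1 (\<lambda>i x. a 0 x * c i x + b 0 x * d i x) (DO V 0 a b)"
    by (rule repr_ext[OF r]) (auto simp: DO_def)
  then show ?case
    using d(2) repr_above[OF c(1), of 1] by (auto intro!: exI[of _ "\<lambda>i x. a 0 x * c i x + b 0 x * d i x"])
next
  case (Suc M)
  then obtain c where c: "repr (Suc (2*M)) c (DO V M a b)" "c (Suc (2*M)) = (\<lambda>x. (-1)^M * b M x)" by blast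
  obtain e where e: "repr (2*Suc M) e (P V (Suc M))" "e (2*Suc M) = (\<lambda>x. (-1)^Suc M)" using repr_P[OF sV] by blast
  obtain d where d: "repr (Suc (2*Suc M)) d (\<lambda>\<psi>. deriv (P V (Suc M) \<psi>))" "d (Suc (2*Suc M)) = (\<lambda>x. (-1)^Suc M)"
    using repr_DP[OF sV] by blast
  note r = repr_add[OF repr_add[OF repr_mono[OF c(1), of "Suc (2*Suc M)"] repr_mono[OF repr_mult[OF e(1) sa[of "Suc M"]], of "Suc (2*Suc M)"]] repr_mult[OF d(1) sb[of "Suc M"]]]
  show ?case
    apply (rule exI, rule conjI, rule repr_ext[OF r])
    using d(2) repr_above[OF c(1), of "Suc (2*Suc M)"] repr_above[OF e(1), of "Suc (2*Suc M)"]
    by (auto simp: DO_def)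
qed


definition pm :: "real \<Rightarrow> nat \<Rightarrow> real \<Rightarrow> real" where
  "pm x0 m = (\<lambda>x. (x - x0)^m / fact m)"

lemma pm_DERIV: "(pm x0 m has_real_derivative (if m = 0 then 0 else pm x0 (m - 1) x)) (at x)"
proof (cases m)
  case 0 then show ?thesis by (simp add: pm_def)
next
  case (Suc k)
  have "((\<lambda>x. (x - x0)^m) has_real_derivative (of_nat m * (1 * (x - x0)^(m - Suc 0)))) (at x)"
    by (rule DERIV_power) (auto intro!: derivative_eq_intros)
  then have "((\<lambda>x. (x - x0)^m / fact m) has_real_derivative (of_nat m * (1 * (x - x0)^(m - Suc 0))) / fact m) (at x)"
    by (rule DERIV_cdivide)
  moreover have "(of_nat m * (1 * (x - x0)^(m - Suc 0))) / fact m = (x - x0)^k / fact k"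
  proof -
    have "(fact m :: real) = of_nat m * fact k" using Suc by (simp add: fact_Suc)
    moreover have "real m \<noteq> 0" using Suc by simp
    ultimately show ?thesis using Suc by simp
  qed
  ultimately show ?thesis using Suc by (simp add: pm_def)
qed

lemma deriv_pm: "deriv (pm x0 m) = (if m = 0 then (\<lambda>_. 0) else pm x0 (m - 1))"
proof (rule ext)
  fix x
  have "deriv (pm x0 m) x = (if m = 0 then 0 else pm x0 (m - 1) x)"
    by (rule DERIV_imp_deriv[OF pm_DERIV])
  then show "deriv (pm x0 m) x = (if m = 0 then (\<lambda>_. 0) else pm x0 (m - 1)) x" by simp
qed

lemma smooth_pm: "smooth (pm x0 m)"
proof (rule smooth_coinduct[where P="\<lambda>h. (\<exists>m. h = pm x0 m) \<or> h = (\<lambda>_. 0)"])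
  fix g assume hg: "(\<exists>m. g = pm x0 m) \<or> g = (\<lambda>_. 0)"
  show "(\<forall>x. g differentiable at x) \<and> ((\<exists>m. deriv g = pm x0 m) \<or> deriv g = (\<lambda>_. 0))"
  proof
    show "\<forall>x. g differentiable at x"
      using hg pm_DERIV real_differentiable_def DERIV_const by fastforce
    show "(\<exists>m. deriv g = pm x0 m) \<or> deriv g = (\<lambda>_. 0)" using hg by (auto simp: deriv_pm)
  qed
qed auto

lemma Dn_pm: "Dn i (pm x0 m) = (if i \<le> m then pm x0 (m - i) else (\<lambda>_. 0))"
proof (induction i)
  case (Suc i) then show ?case by (auto simp: Dn_Suc deriv_pm Suc_diff_Suc)
qed simp

lemma Dn_pm_x0: "Dn i (pm x0 m) x0 = (if i = m then 1 else 0)"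
  by (simp add: Dn_pm) (simp add: pm_def)

lemma sum_single: "(K::nat) \<le> M \<Longrightarrow> (\<And>k. k \<le> M \<Longrightarrow> k \<noteq> K \<Longrightarrow> f k = 0) \<Longrightarrow> (\<Sum>k\<le>M. f k) = (f K :: real)"
  by (subst sum.remove[of "{..M}" K]) (auto intro!: sum.neutral)

lemma repr_pm: "repr n c T \<Longrightarrow> T (pm x0 m) x0 = (if m \<le> n then c m x0 else 0)"
proof -
  assume r: "repr n c T"
  have "T (pm x0 m) x0 = (\<Sum>i\<le>n. c i x0 * Dn i (pm x0 m) x0)" using repr_eq[OF r smooth_pm] .
  also have "\<dots> = (if m \<le> n then c m x0 else 0)"
    by (auto simp: Dn_pm_x0 intro!: sum.neutral sum_single[of m n, THEN trans])
  finally show ?thesis .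
qed

lemma uniqueness:
  assumes sV: "smooth V"
    and H: "\<And>\<psi>. smooth \<psi> \<Longrightarrow> (\<Sum>k\<le>M. A k x0 * P V k \<psi> x0 + B k x0 * deriv (P V k \<psi>) x0) = 0"
  shows "K \<le> M \<Longrightarrow> A K x0 = 0 \<and> B K x0 = 0"
proof (induction "M - K" arbitrary: K rule: less_induct)
  case less
  have IH: "A k x0 = 0 \<and> B k x0 = 0" if "K < k" "k \<le> M" for k
    using less.hyps that by auto
  define cP where "cP k = (SOME c. repr (2*k) c (P V k) \<and> c (2*k) = (\<lambda>x. (-1)^k))" for k
  define cD where "cD k = (SOME c. repr (Suc (2*k)) c (\<lambda>\<psi>. deriv (P V k \<psi>)) \<and> c (Suc (2*k)) = (\<lambda>x. (-1)^k))" for k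
  have cP: "repr (2*k) (cP k) (P V k) \<and> cP k (2*k) = (\<lambda>x. (-1)^k)" for k
    unfolding cP_def by (rule someI_ex[of "\<lambda>c. repr (2*k) c (P V k) \<and> c (2*k) = (\<lambda>x. (-1)^k)"]) (rule repr_P[OF sV])
  have cD: "repr (Suc (2*k)) (cD k) (\<lambda>\<psi>. deriv (P V k \<psi>)) \<and> cD k (Suc (2*k)) = (\<lambda>x. (-1)^k)" for k
    unfolding cD_def by (rule someI_ex[of "\<lambda>c. repr (Suc (2*k)) c (\<lambda>\<psi>. deriv (P V k \<psi>)) \<and> c (Suc (2*k)) = (\<lambda>x. (-1)^k)"]) (rule repr_DP[OF sV])
  have eP: "P V k (pm x0 m) x0 = (if m \<le> 2*k then cP k m x0 else 0)" for k m
    using repr_pm[of "2*k" "cP k" "P V k" x0 m] cP by auto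
  have eD: "deriv (P V k (pm x0 m)) x0 = (if m \<le> Suc (2*k) then cD k m x0 else 0)" for k m
    using repr_pm[of "Suc (2*k)" "cD k" "\<lambda>\<psi>. deriv (P V k \<psi>)" x0 m] cD by auto
  have "(\<Sum>k\<le>M. A k x0 * P V k (pm x0 (Suc (2*K))) x0 + B k x0 * deriv (P V k (pm x0 (Suc (2*K)))) x0)
      = A K x0 * P V K (pm x0 (Suc (2*K))) x0 + B K x0 * deriv (P V K (pm x0 (Suc (2*K)))) x0"
  proof (rule sum_single)
    show "K \<le> M" by fact
    fix k assume "k \<le> M" "k \<noteq> K"
    then show "A k x0 * P V k (pm x0 (Suc (2*K))) x0 + B k x0 * deriv (P V k (pm x0 (Suc (2*K)))) x0 = 0"
      using IH[of k] by (cases "K < k") (auto simp: eP eD)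
  qed
  then have "B K x0 * (-1)^K = 0" using H[OF smooth_pm[of x0 "Suc (2*K)"]] cD[of K] by (simp add: eP eD)
  then have B0: "B K x0 = 0" by simp
  have "(\<Sum>k\<le>M. A k x0 * P V k (pm x0 (2*K)) x0 + B k x0 * deriv (P V k (pm x0 (2*K))) x0)
      = A K x0 * P V K (pm x0 (2*K)) x0 + B K x0 * deriv (P V K (pm x0 (2*K))) x0"
  proof (rule sum_single)
    show "K \<le> M" by fact
    fix k assume "k \<le> M" "k \<noteq> K"
    then show "A k x0 * P V k (pm x0 (2*K)) x0 + B k x0 * deriv (P V k (pm x0 (2*K))) x0 = 0"
      using IH[of k] by (cases "K < k") (auto simp: eP eD)
  qed
  then have "A K x0 * (-1)^K = 0" using H[OF smooth_pm[of x0 "2*K"]] cP[of K] B0 by (simp add: eP eD)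
  then show ?case using B0 by simp
qed


lemma nL_smooth: "smooth V \<Longrightarrow> smooth \<psi> \<Longrightarrow> smooth (nL V \<psi>)"
  unfolding nL_def by (auto intro!: smooth_minus smooth_add smooth_mult smooth_Dn)

lemma deriv_sum_fun: "finite S \<Longrightarrow> (\<And>k. k \<in> S \<Longrightarrow> smooth (f k)) \<Longrightarrow> deriv (\<lambda>x. \<Sum>k\<in>S. f k x) = (\<lambda>x. \<Sum>k\<in>S. deriv (f k) x)"
proof (rule ext)
  fix x assume fin: "finite S" and sm: "\<And>k. k \<in> S \<Longrightarrow> smooth (f k)"
  have "((\<lambda>x. \<Sum>k\<in>S. f k x) has_real_derivative (\<Sum>k\<in>S. deriv (f k) x)) (at x)"
    using fin sm by (intro DERIV_sum) (auto intro: smooth_DERIV)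
  then show "deriv (\<lambda>x. \<Sum>k\<in>S. f k x) x = (\<Sum>k\<in>S. deriv (f k) x)" by (rule DERIV_imp_deriv)
qed

lemma nL_sum:
  assumes "finite S" "\<And>k. k \<in> S \<Longrightarrow> smooth (f k)"
  shows "nL V (\<lambda>x. \<Sum>k\<in>S. f k x) x = (\<Sum>k\<in>S. nL V (f k) x)"
proof -
  have "deriv (deriv (\<lambda>x. \<Sum>k\<in>S. f k x)) = (\<lambda>x. \<Sum>k\<in>S. deriv (deriv (f k)) x)"
    using assms by (simp add: deriv_sum_fun smooth_deriv)
  then show ?thesis by (simp add: nL_def Dn_2 sum_subtractf sum_distrib_left sum_negf)
qed

lemma P_Suc: "P V (Suc k) \<psi> = nL V (P V k \<psi>)"
  by (simp add: P_def)

lemma P_Suc': "P V k (nL V \<psi>) = nL V (P V k \<psi>)"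
  by (simp add: P_def funpow_Suc_right del: funpow.simps) (simp add: funpow_swap1)

lemma key_nL:
  assumes sa: "smooth a" and sb: "smooth b" and sp: "smooth \<phi>" and sV: "smooth V"
  shows "nL V (\<lambda>x. a x * \<phi> x + b x * deriv \<phi> x) x - (a x * nL V \<phi> x + b x * deriv (nL V \<phi>) x)
    = 2 * deriv b x * nL V \<phi> x - (deriv (deriv b) x + 2 * deriv a x) * deriv \<phi> x
      - (deriv (deriv a) x - b x * deriv V x - 2 * deriv b x * V x) * \<phi> x"
proof -
  have n: "nL V f = (\<lambda>x. - schrL V f x)" for f by (simp add: nL_def schrL_def)
  have s: "smooth (schrL V \<phi>)" unfolding schrL_def using sp sV by (auto intro!: smooth_add smooth_mult smooth_Dn)
  have d: "deriv (\<lambda>x. - schrL V \<phi> x) x = - deriv (schrL V \<phi>) x" using s by (simp add: smooth_fd)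
  show ?thesis using key_identity[OF sa sb sp sV, of x] unfolding n d by (simp add: algebra_simps)
qed

lemma comm_DO:
  assumes sV: "smooth V" and sa: "\<And>k. smooth (a k)" and sb: "\<And>k. smooth (b k)" and sp: "smooth \<psi>"
    and za: "a (Suc M) = (\<lambda>_. 0)" and zb: "b (Suc M) = (\<lambda>_. 0)"
  shows "nL V (DO V M a b \<psi>) x - DO V M a b (nL V \<psi>) x =
    (\<Sum>k\<le>Suc M. ((case k of 0 \<Rightarrow> 0 | Suc j \<Rightarrow> 2 * deriv (b j) x)
         - (deriv (deriv (a k)) x - b k x * deriv V x - 2 * deriv (b k) x * V x)) * P V k \<psi> x
       + (- (deriv (deriv (b k)) x + 2 * deriv (a k) x)) * deriv (P V k \<psi>) x)"
proof -
  have sP: "smooth (P V k \<psi>)" for k using P_smooth[OF sV sp] .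
  have sm: "smooth (\<lambda>x. a k x * P V k \<psi> x + b k x * deriv (P V k \<psi>) x)" for k
    using sa sb sP by (auto intro!: smooth_add smooth_mult smooth_deriv)
  have "nL V (DO V M a b \<psi>) x = (\<Sum>k\<le>M. nL V (\<lambda>x. a k x * P V k \<psi> x + b k x * deriv (P V k \<psi>) x) x)"
    unfolding DO_def by (rule nL_sum) (auto intro: sm)
  moreover have "DO V M a b (nL V \<psi>) x = (\<Sum>k\<le>M. a k x * nL V (P V k \<psi>) x + b k x * deriv (nL V (P V k \<psi>)) x)"
    unfolding DO_def P_Suc' ..
  ultimately have "nL V (DO V M a b \<psi>) x - DO V M a b (nL V \<psi>) x =
     (\<Sum>k\<le>M. 2 * deriv (b k) x * P V (Suc k) \<psi> x - (deriv (deriv (b k)) x + 2 * deriv (a k) x) * deriv (P V k \<psi>) x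
      - (deriv (deriv (a k)) x - b k x * deriv V x - 2 * deriv (b k) x * V x) * P V k \<psi> x)"
    using key_nL[OF sa sb sP sV] by (simp add: sum_subtractf[symmetric] P_Suc)
  also have "\<dots> = (\<Sum>k\<le>M. 2 * deriv (b k) x * P V (Suc k) \<psi> x) + (\<Sum>k\<le>M. - (deriv (deriv (b k)) x + 2 * deriv (a k) x) * deriv (P V k \<psi>) x
      - (deriv (deriv (a k)) x - b k x * deriv V x - 2 * deriv (b k) x * V x) * P V k \<psi> x)"
    by (simp add: sum.distrib[symmetric] algebra_simps)
  also have "(\<Sum>k\<le>M. 2 * deriv (b k) x * P V (Suc k) \<psi> x) = (\<Sum>k\<le>Suc M. (case k of 0 \<Rightarrow> 0 | Suc j \<Rightarrow> 2 * deriv (b j) x) * P V k \<psi> x)"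
    by (subst sum.atMost_Suc_shift) simp
  also have "(\<Sum>k\<le>M. - (deriv (deriv (b k)) x + 2 * deriv (a k) x) * deriv (P V k \<psi>) x
      - (deriv (deriv (a k)) x - b k x * deriv V x - 2 * deriv (b k) x * V x) * P V k \<psi> x)
     = (\<Sum>k\<le>Suc M. - (deriv (deriv (b k)) x + 2 * deriv (a k) x) * deriv (P V k \<psi>) x
      - (deriv (deriv (a k)) x - b k x * deriv V x - 2 * deriv (b k) x * V x) * P V k \<psi> x)"
    using za zb by simp
  finally show ?thesis by (simp add: sum.distrib[symmetric] algebra_simps)
qed


lemma smooth_if: "smooth f \<Longrightarrow> smooth g \<Longrightarrow> smooth (\<lambda>x. if Q then f x else g x)"
  by (cases Q) simp_all

lemma smooth_upd: "smooth (f k) \<Longrightarrow> smooth g \<Longrightarrow> smooth (\<lambda>x. f k x + (if k = K then g x else 0))"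
  by (cases "k = K") (simp_all add: smooth_add)

lemma m1sq: "((-1::real)^K) * (-1)^K = 1"
  by (simp add: power_mult_distrib[symmetric])

lemma repr_drop: "repr (Suc m) c T \<Longrightarrow> c (Suc m) = (\<lambda>_. 0) \<Longrightarrow> repr m c T"
proof -
  assume r: "repr (Suc m) c T" and z: "c (Suc m) = (\<lambda>_. 0)"
  have "c i = (\<lambda>_. 0)" if "m < i" for i
  proof (cases "i = Suc m")
    case False then show ?thesis using that repr_above[OF r, of i] by simp
  qed (use z in simp)
  moreover have "T \<psi> = (\<lambda>x. \<Sum>i\<le>m. c i x * Dn i \<psi> x)" if "smooth \<psi>" for \<psi>
    using repr_eq[OF r that] z by auto
  ultimately show ?thesis using r unfolding repr_def by auto
qed

lemma DO_bound:
  assumes "M \<le> M'" "\<And>k. M < k \<Longrightarrow> k \<le> M' \<Longrightarrow> a k = (\<lambda>_. 0) \<and> b k = (\<lambda>_. 0)"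
  shows "DO V M' a b \<psi> = DO V M a b \<psi>"
  unfolding DO_def using assms by (intro ext sum.mono_neutral_right) auto

lemma DO_updA:
  assumes "K \<le> M"
  shows "DO V M (\<lambda>k x. a k x + (if k = K then g x else 0)) b \<psi> x = DO V M a b \<psi> x + g x * P V K \<psi> x"
proof -
  have e: "(a k x + (if k = K then g x else 0)) * P V k \<psi> x + b k x * deriv (P V k \<psi>) x
      = (a k x * P V k \<psi> x + b k x * deriv (P V k \<psi>) x) + (if k = K then g x * P V K \<psi> x else 0)" for k
    by (auto simp: algebra_simps)
  have "DO V M (\<lambda>k x. a k x + (if k = K then g x else 0)) b \<psi> x
     = DO V M a b \<psi> x + (\<Sum>k\<le>M. (if k = K then g x * P V K \<psi> x else 0))"
    unfolding DO_def e by (simp add: sum.distrib)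
  then show ?thesis using assms by simp
qed

lemma DO_updB:
  assumes "K \<le> M"
  shows "DO V M a (\<lambda>k x. b k x + (if k = K then g x else 0)) \<psi> x = DO V M a b \<psi> x + g x * deriv (P V K \<psi>) x"
proof -
  have e: "a k x * P V k \<psi> x + (b k x + (if k = K then g x else 0)) * deriv (P V k \<psi>) x
      = (a k x * P V k \<psi> x + b k x * deriv (P V k \<psi>) x) + (if k = K then g x * deriv (P V K \<psi>) x else 0)" for k
    by (auto simp: algebra_simps)
  have "DO V M a (\<lambda>k x. b k x + (if k = K then g x else 0)) \<psi> x
     = DO V M a b \<psi> x + (\<Sum>k\<le>M. (if k = K then g x * deriv (P V K \<psi>) x else 0))"
    unfolding DO_def e by (simp add: sum.distrib)
  then show ?thesis using assms by simp
qed

lemma division: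
  assumes sV: "smooth V"
  shows "repr n c T \<Longrightarrow> \<exists>a b. (\<forall>k. smooth (a k) \<and> smooth (b k)) \<and> (\<forall>k. n < 2*k \<longrightarrow> a k = (\<lambda>_. 0))
     \<and> (\<forall>k. n < Suc (2*k) \<longrightarrow> b k = (\<lambda>_. 0)) \<and> (\<forall>\<psi>. smooth \<psi> \<longrightarrow> T \<psi> = DO V n a b \<psi>)
     \<and> (\<forall>K. n = Suc (2*K) \<longrightarrow> b K = (\<lambda>x. (-1)^K * c n x))"
proof (induction n arbitrary: c T rule: less_induct)
  case (less n)
  have r: "repr n c T" by fact
  have sc: "smooth (c i)" for i using r repr_sm by blast
  show ?case
  proof (cases "n = 0")
    case True
    define a where "a k = (if k = 0 then c 0 else (\<lambda>_. 0))" for k :: nat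
    define b where "b k = (\<lambda>_::real. 0::real)" for k :: nat
    have "T \<psi> = DO V n a b \<psi>" if "smooth \<psi>" for \<psi>
      using repr_eq[OF r that] True by (auto simp: DO_def a_def b_def P_def)
    moreover have "\<forall>k. smooth (a k) \<and> smooth (b k)" by (simp add: a_def b_def sc)
    moreover have "\<forall>k. n < 2*k \<longrightarrow> a k = (\<lambda>_. 0)" by (auto simp: a_def)
    moreover have "\<forall>k. n < Suc (2*k) \<longrightarrow> b k = (\<lambda>_. 0)" by (simp add: b_def)
    moreover have "\<forall>K. n \<noteq> Suc (2*K)" using True by simp
    ultimately show ?thesis by (intro exI[of _ a] exI[of _ b]) simp
  next
    case False
    then obtain m where m: "n = Suc m" by (cases n) auto
    show ?thesis
    proof (cases "even n")
      case True
      then obtain K where K: "n = 2*K" by blast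
      obtain e where e: "repr (2*K) e (P V K)" "e (2*K) = (\<lambda>x. (-1)^K)" using repr_P[OF sV] by blast
      define f where "f x = - ((-1)^K * c n x)" for x
      have sf: "smooth f" unfolding f_def by (intro smooth_minus smooth_cmult sc)
      note r1 = repr_add[OF r repr_mult[OF e(1) sf, unfolded K[symmetric]]]
      have top: "(\<lambda>x. c n x + f x * e n x) = (\<lambda>_. 0)"
        using e(2) K m1sq[of K] by (auto simp: f_def algebra_simps)
      note r2 = repr_drop[OF r1[unfolded m] top[unfolded m]]
      obtain a b where ab: "\<forall>k. smooth (a k) \<and> smooth (b k)" "\<forall>k. m < 2*k \<longrightarrow> a k = (\<lambda>_. 0)"
        "\<forall>k. m < Suc (2*k) \<longrightarrow> b k = (\<lambda>_. 0)" "\<forall>\<psi>. smooth \<psi> \<longrightarrow> (\<lambda>x. T \<psi> x + f x * P V K \<psi> x) = DO V m a b \<psi>"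
        using less.IH[OF _ r2] m by blast
      define a' where "a' k x = a k x + (if k = K then (-1)^K * c n x else 0)" for k x
      have Kn: "K \<le> n" using K by simp
      have "T \<psi> = DO V n a' b \<psi>" if sp: "smooth \<psi>" for \<psi>
      proof
        fix x
        have "DO V n a' b \<psi> x = DO V n a b \<psi> x + (-1)^K * c n x * P V K \<psi> x"
          unfolding a'_def[abs_def] using DO_updA[OF Kn] by simp
        also have "DO V n a b \<psi> = DO V m a b \<psi>"
          by (rule DO_bound) (use ab m in auto)
        also have "DO V m a b \<psi> x = T \<psi> x + f x * P V K \<psi> x" using ab(4) sp by metis
        finally show "T \<psi> x = DO V n a' b \<psi> x" by (simp add: f_def)
      qed
      moreover have "\<forall>k. smooth (a' k) \<and> smooth (b k)"
      proof (intro allI conjI)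
        fix k show "smooth (b k)" using ab(1) by blast
        have "smooth (a k)" using ab(1) by blast
        have "smooth (\<lambda>x. (-1)^K * c n x)" by (rule smooth_cmult[OF sc])
        then show "smooth (a' k)" unfolding a'_def[abs_def]
          by (rule smooth_upd[of a k, OF \<open>smooth (a k)\<close>])
      qed
      moreover have "\<forall>k. n < 2*k \<longrightarrow> a' k = (\<lambda>_. 0)" using ab(2) m K unfolding a'_def[abs_def] by auto
      moreover have "\<forall>k. n < Suc (2*k) \<longrightarrow> b k = (\<lambda>_. 0)" using ab(3) m by auto
      moreover have "\<forall>K'. n \<noteq> Suc (2*K')" using True by auto
      ultimately show ?thesis by (intro exI[of _ a'] exI[of _ b]) simp
    next
      case False
      define K where "K = n div 2"
      have K: "n = Suc (2*K)" using False unfolding K_def by presburger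
      obtain e where e: "repr (Suc (2*K)) e (\<lambda>\<psi>. deriv (P V K \<psi>))" "e (Suc (2*K)) = (\<lambda>x. (-1)^K)"
        using repr_DP[OF sV] by blast
      define f where "f x = - ((-1)^K * c n x)" for x
      have sf: "smooth f" unfolding f_def by (intro smooth_minus smooth_cmult sc)
      note r1 = repr_add[OF r repr_mult[OF e(1) sf, unfolded K[symmetric]]]
      have top: "(\<lambda>x. c n x + f x * e n x) = (\<lambda>_. 0)"
        using e(2) K m1sq[of K] by (auto simp: f_def algebra_simps)
      note r2 = repr_drop[OF r1[unfolded m] top[unfolded m]]
      obtain a b where ab: "\<forall>k. smooth (a k) \<and> smooth (b k)" "\<forall>k. m < 2*k \<longrightarrow> a k = (\<lambda>_. 0)"
        "\<forall>k. m < Suc (2*k) \<longrightarrow> b k = (\<lambda>_. 0)" "\<forall>\<psi>. smooth \<psi> \<longrightarrow> (\<lambda>x. T \<psi> x + f x * deriv (P V K \<psi>) x) = DO V m a b \<psi>"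
        using less.IH[OF _ r2] m by blast
      define b' where "b' k x = b k x + (if k = K then (-1)^K * c n x else 0)" for k x
      have Kn: "K \<le> n" using K by simp
      have "T \<psi> = DO V n a b' \<psi>" if sp: "smooth \<psi>" for \<psi>
      proof
        fix x
        have "DO V n a b' \<psi> x = DO V n a b \<psi> x + (-1)^K * c n x * deriv (P V K \<psi>) x"
          unfolding b'_def[abs_def] using DO_updB[OF Kn] by simp
        also have "DO V n a b \<psi> = DO V m a b \<psi>"
          by (rule DO_bound) (use ab m in auto)
        also have "DO V m a b \<psi> x = T \<psi> x + f x * deriv (P V K \<psi>) x" using ab(4) sp by metis
        finally show "T \<psi> x = DO V n a b' \<psi> x" by (simp add: f_def)
      qed
      moreover have "\<forall>k. smooth (a k) \<and> smooth (b' k)"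
      proof (intro allI conjI)
        fix k show "smooth (a k)" using ab(1) by blast
        have "smooth (b k)" using ab(1) by blast
        have "smooth (\<lambda>x. (-1)^K * c n x)" by (rule smooth_cmult[OF sc])
        then show "smooth (b' k)" unfolding b'_def[abs_def]
          by (rule smooth_upd[of b k, OF \<open>smooth (b k)\<close>])
      qed
      moreover have "\<forall>k. n < 2*k \<longrightarrow> a k = (\<lambda>_. 0)" using ab(2) m by auto
      moreover have "\<forall>k. n < Suc (2*k) \<longrightarrow> b' k = (\<lambda>_. 0)" using ab(3) m K unfolding b'_def[abs_def] by auto
      moreover have "b' K = (\<lambda>x. (-1)^K * c n x)" using ab(3) m K unfolding b'_def[abs_def] by auto
      then have "\<forall>K'. n = Suc (2*K') \<longrightarrow> b' K' = (\<lambda>x. (-1)^K' * c n x)" using K by auto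
      ultimately show ?thesis by (intro exI[of _ a] exI[of _ b']) simp
    qed
  qed
qed


lemma schrL_smooth: "smooth V \<Longrightarrow> smooth \<psi> \<Longrightarrow> smooth (schrL V \<psi>)"
  unfolding schrL_def by (auto intro!: smooth_add smooth_mult smooth_Dn)

lemma schrL_nL: "schrL V f = (\<lambda>x. - nL V f x)"
  by (simp add: nL_def schrL_def add.commute)

lemma schrL_cmult: "smooth f \<Longrightarrow> schrL V (\<lambda>x. s * f x) = (\<lambda>x. s * schrL V f x)"
  by (simp add: schrL_def Dn_cmult algebra_simps)

lemma deriv_poly:
  assumes "\<And>j. j \<le> N \<Longrightarrow> smooth (f j)"
  shows "deriv (\<lambda>x. \<Sum>j\<le>N. f j x * e^j) = (\<lambda>x. \<Sum>j\<le>N. deriv (f j) x * e^j)"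
proof -
  have "deriv (\<lambda>x. \<Sum>j\<le>N. f j x * e^j) = (\<lambda>x. \<Sum>j\<le>N. deriv (\<lambda>x. f j x * e^j) x)"
    using assms by (intro deriv_sum_fun) (auto intro!: smooth_mult)
  also have "\<dots> = (\<lambda>x. \<Sum>j\<le>N. deriv (f j) x * e^j)"
    using assms by (intro ext sum.cong refl) (simp add: smooth_fd)
  finally show ?thesis .
qed

lemma smooth_poly: "(\<And>j. j \<le> N \<Longrightarrow> smooth (f j)) \<Longrightarrow> smooth (\<lambda>x. \<Sum>j\<le>N. f j x * e^j)"
  by (intro smooth_sum smooth_mult) auto

lemma opQ_repr:
  assumes "\<forall>j\<le>2*N. smooth (q j)"
  shows "repr (Suc (2*N)) (\<lambda>j. if j = Suc (2*N) then (\<lambda>x. 1) else if j \<le> 2*N then q j else (\<lambda>x. 0)) (opQ N q)"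
  unfolding repr_def
proof (intro conjI allI impI)
  fix i show "smooth (if i = Suc (2*N) then (\<lambda>x. 1) else if i \<le> 2*N then q i else (\<lambda>x. 0))"
    using assms by auto
next
  fix i assume "Suc (2*N) < i"
  then show "(if i = Suc (2*N) then (\<lambda>x. 1) else if i \<le> 2*N then q i else (\<lambda>x. 0)) = (\<lambda>_. 0)" by auto
next
  fix \<psi> :: "real \<Rightarrow> real"
  show "opQ N q \<psi> = (\<lambda>x. \<Sum>i\<le>Suc (2*N). (if i = Suc (2*N) then (\<lambda>x. 1) else if i \<le> 2*N then q i else (\<lambda>x. 0)) x * Dn i \<psi> x)"
    unfolding opQ_def by (rule ext) (auto simp: sum.atMost_Suc intro!: sum.cong)
qed


lemma qhat_identity:
  assumes sV: "smooth V" and sA: "smooth A" and sB: "smooth B" and sp: "smooth \<psi>"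
    and E1: "\<And>x. deriv (deriv A) x + 2 * deriv B x = 0"
    and E2: "\<And>x. deriv (deriv B) x - A x * deriv V x - 2 * deriv A x * V x = 2 * e * deriv A x"
    and Q: "\<And>g. Q g = (\<lambda>x. A x * deriv g x + B x * g x)"
  shows "(\<lambda>x. schrL V (Q \<psi>) x + e * Q \<psi> x) - Q (\<lambda>x. schrL V \<psi> x + e * \<psi> x)
      = (\<lambda>x. (2 * deriv A x) * (schrL V \<psi> x + e * \<psi> x))"
proof (rule ext)
  fix x
  have sL: "smooth (schrL V \<psi>)" by (rule schrL_smooth[OF sV sp])
  note K = key_identity[OF sB sA sp sV, of x]
  have q1: "Q \<psi> = (\<lambda>x. B x * \<psi> x + A x * deriv \<psi> x)" unfolding Q by (auto simp: add.commute)
  have d: "deriv (\<lambda>x. schrL V \<psi> x + e * \<psi> x) x = deriv (schrL V \<psi>) x + e * deriv \<psi> x"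
    using sL sp by (simp add: sm_simps)
  show "((\<lambda>x. schrL V (Q \<psi>) x + e * Q \<psi> x) - Q (\<lambda>x. schrL V \<psi> x + e * \<psi> x)) x
      = 2 * deriv A x * (schrL V \<psi> x + e * \<psi> x)" (is ?thesis)
  proof -
    have E1': "deriv (deriv A) x = - 2 * deriv B x" using E1[of x] by simp
    show ?thesis using K E1' E2[of x] unfolding fun_diff_def Q[of "\<lambda>x. schrL V \<psi> x + e * \<psi> x"] d
    unfolding q1 by (simp add: algebra_simps)
  qed
qed


lemma dir1:
  assumes sV: "smooth V" and sq: "\<forall>j\<le>2*N. smooth (q j)"
    and comm: "\<forall>\<psi>. smooth \<psi> \<longrightarrow> opQ N q (schrL V \<psi>) = schrL V (opQ N q \<psi>)"
  shows "\<exists>(a :: nat \<Rightarrow> real \<Rightarrow> real) (b :: nat \<Rightarrow> real \<Rightarrow> real) (r :: real \<Rightarrow> real \<Rightarrow> real).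
            (\<forall>j\<le>N. smooth (a j) \<and> smooth (b j)) \<and> (\<forall>x. a N x = 1) \<and>
            (\<forall>\<epsilon> :: real. \<forall>\<psi>. smooth \<psi> \<longrightarrow>
               (\<lambda>x. schrL V (opQhat N a b \<epsilon> \<psi>) x + \<epsilon> * opQhat N a b \<epsilon> \<psi> x)
               - opQhat N a b \<epsilon> (\<lambda>x. schrL V \<psi> x + \<epsilon> * \<psi> x)
               = (\<lambda>x. r x \<epsilon> * (schrL V \<psi> x + \<epsilon> * \<psi> x)))"
proof -
  define c where "c = (\<lambda>j. if j = Suc (2*N) then (\<lambda>x. 1) else if j \<le> 2*N then q j else (\<lambda>x::real. 0::real))"
  have r0: "repr (Suc (2*N)) c (opQ N q)" unfolding c_def by (rule opQ_repr[OF sq])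
  note r1 = repr_cmult[OF r0, of "(-1)^N"]
  define M where "M = Suc (2*N)"
  obtain \<alpha> \<beta> where ab: "\<forall>k. smooth (\<alpha> k) \<and> smooth (\<beta> k)" "\<forall>k. M < 2*k \<longrightarrow> \<alpha> k = (\<lambda>_. 0)"
     "\<forall>k. M < Suc (2*k) \<longrightarrow> \<beta> k = (\<lambda>_. 0)"
     "\<forall>\<psi>. smooth \<psi> \<longrightarrow> (\<lambda>x. (-1)^N * opQ N q \<psi> x) = DO V M \<alpha> \<beta> \<psi>"
     "\<forall>K. M = Suc (2*K) \<longrightarrow> \<beta> K = (\<lambda>x. (-1)^K * ((-1)^N * c M x))"
    using division[OF sV r1] unfolding M_def by blast
  have sa: "smooth (\<alpha> k)" and sb: "smooth (\<beta> k)" for k using ab(1) by auto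
  have bN: "\<beta> N = (\<lambda>x. 1)" using ab(5) m1sq[of N] unfolding M_def c_def by (simp add: mult.assoc[symmetric])
  have za: "\<alpha> (Suc M) = (\<lambda>_. 0)" and zb: "\<beta> (Suc M) = (\<lambda>_. 0)" using ab(2,3) by auto
  have commDO: "nL V (DO V M \<alpha> \<beta> \<psi>) = DO V M \<alpha> \<beta> (nL V \<psi>)" if sp: "smooth \<psi>" for \<psi>
  proof -
    have sL: "smooth (schrL V \<psi>)" by (rule schrL_smooth[OF sV sp])
    have sQ: "smooth (opQ N q \<psi>)" by (rule repr_smooth[OF r0 sp])
    have n1: "nL V \<psi> = (\<lambda>x. - schrL V \<psi> x)" by (simp add: schrL_nL)
    have "DO V M \<alpha> \<beta> (nL V \<psi>) = (\<lambda>x. (-1)^N * opQ N q (nL V \<psi>) x)"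
      using ab(4) nL_smooth[OF sV sp] by auto
    also have "opQ N q (nL V \<psi>) = (\<lambda>x. - opQ N q (schrL V \<psi>) x)"
      unfolding n1 by (rule repr_neg[OF r0 sL])
    also have "opQ N q (schrL V \<psi>) = schrL V (opQ N q \<psi>)" using comm sp by blast
    finally have e1: "DO V M \<alpha> \<beta> (nL V \<psi>) = (\<lambda>x. - ((-1)^N * schrL V (opQ N q \<psi>) x))" by simp
    have "nL V (DO V M \<alpha> \<beta> \<psi>) = nL V (\<lambda>x. (-1)^N * opQ N q \<psi> x)" using ab(4) sp by auto
    also have "\<dots> = (\<lambda>x. - schrL V (\<lambda>x. (-1)^N * opQ N q \<psi> x) x)" by (simp add: schrL_nL)
    also have "\<dots> = (\<lambda>x. - ((-1)^N * schrL V (opQ N q \<psi>) x))" by (simp add: schrL_cmult[OF sQ])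
    finally show ?thesis using e1 by simp
  qed
  define AA where "AA k x = (case k of 0 \<Rightarrow> 0 | Suc j \<Rightarrow> 2 * deriv (\<beta> j) x)
         - (deriv (deriv (\<alpha> k)) x - \<beta> k x * deriv V x - 2 * deriv (\<beta> k) x * V x)" for k x
  define BB where "BB k x = - (deriv (deriv (\<beta> k)) x + 2 * deriv (\<alpha> k) x)" for k x
  have H: "(\<Sum>k\<le>Suc M. AA k x * P V k \<psi> x + BB k x * deriv (P V k \<psi>) x) = 0" if sp: "smooth \<psi>" for \<psi> x
  proof -
    have "nL V (DO V M \<alpha> \<beta> \<psi>) x - DO V M \<alpha> \<beta> (nL V \<psi>) x = 0" using commDO[OF sp] by simp
    moreover have "(\<Sum>k\<le>Suc M. AA k x * P V k \<psi> x + BB k x * deriv (P V k \<psi>) x) = nL V (DO V M \<alpha> \<beta> \<psi>) x - DO V M \<alpha> \<beta> (nL V \<psi>) x"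
      unfolding AA_def BB_def by (rule comm_DO[of V \<alpha> \<beta> \<psi> M x, OF sV sa sb sp za zb, symmetric])
    ultimately show ?thesis by simp
  qed
  have zz: "AA k x = 0 \<and> BB k x = 0" if kM: "k \<le> Suc M" for k x
  proof -
    have HH: "\<And>\<psi>. smooth \<psi> \<Longrightarrow> (\<Sum>k\<le>Suc M. AA k x * P V k \<psi> x + BB k x * deriv (P V k \<psi>) x) = 0"
      using H by blast
    show ?thesis by (rule uniqueness[where A=AA and B=BB and M="Suc M", OF sV HH kM])
  qed
  define r :: "real \<Rightarrow> real \<Rightarrow> real" where "r = (\<lambda>x e. 2 * (\<Sum>j\<le>N. deriv (\<beta> j) x * e^j))"
  have main: "(\<lambda>x. schrL V (opQhat N \<beta> \<alpha> e \<psi>) x + e * opQhat N \<beta> \<alpha> e \<psi> x)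
               - opQhat N \<beta> \<alpha> e (\<lambda>x. schrL V \<psi> x + e * \<psi> x)
               = (\<lambda>x. r x e * (schrL V \<psi> x + e * \<psi> x))" if sp: "smooth \<psi>" for e \<psi>
  proof -
    define A where "A x = (\<Sum>j\<le>N. \<beta> j x * e^j)" for x
    define B where "B x = (\<Sum>j\<le>N. \<alpha> j x * e^j)" for x
    have sA: "smooth A" unfolding A_def[abs_def] by (rule smooth_poly) (rule sb)
    have sB: "smooth B" unfolding B_def[abs_def] by (rule smooth_poly) (rule sa)
    have dA: "deriv A = (\<lambda>x. \<Sum>j\<le>N. deriv (\<beta> j) x * e^j)" unfolding A_def[abs_def] by (rule deriv_poly) (rule sb)
    have ddA: "deriv (deriv A) = (\<lambda>x. \<Sum>j\<le>N. deriv (deriv (\<beta> j)) x * e^j)" unfolding dA by (rule deriv_poly) (rule smooth_deriv[OF sb])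
    have dB: "deriv B = (\<lambda>x. \<Sum>j\<le>N. deriv (\<alpha> j) x * e^j)" unfolding B_def[abs_def] by (rule deriv_poly) (rule sa)
    have ddB: "deriv (deriv B) = (\<lambda>x. \<Sum>j\<le>N. deriv (deriv (\<alpha> j)) x * e^j)" unfolding dB by (rule deriv_poly) (rule smooth_deriv[OF sa])
    have E1: "deriv (deriv A) x + 2 * deriv B x = 0" for x
    proof -
      have "deriv (deriv A) x + 2 * deriv B x = (\<Sum>j\<le>N. - BB j x * e^j)"
        unfolding ddA dB BB_def by (simp add: sum_distrib_left sum.distrib[symmetric] algebra_simps)
      also have "\<dots> = 0" using zz unfolding M_def by (intro sum.neutral) auto
      finally show ?thesis .
    qed
    have E2: "deriv (deriv B) x - A x * deriv V x - 2 * deriv A x * V x = 2 * e * deriv A x" for x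
    proof -
      define cs where "cs j = (case j of 0 \<Rightarrow> 0 | Suc i \<Rightarrow> 2 * deriv (\<beta> i) x)" for j
      have "deriv (deriv B) x - A x * deriv V x - 2 * deriv A x * V x
         = (\<Sum>j\<le>N. (deriv (deriv (\<alpha> j)) x - \<beta> j x * deriv V x - 2 * deriv (\<beta> j) x * V x) * e^j)"
        unfolding ddB dA A_def by (simp add: sum_distrib_left sum_distrib_right sum_subtractf[symmetric] algebra_simps)
      also have "\<dots> = (\<Sum>j\<le>N. cs j * e^j)"
      proof (rule sum.cong[OF refl])
        fix j assume "j \<in> {..N}"
        then have "AA j x = 0" using zz unfolding M_def by auto
        then show "(deriv (deriv (\<alpha> j)) x - \<beta> j x * deriv V x - 2 * deriv (\<beta> j) x * V x) * e^j = cs j * e^j"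
          unfolding AA_def cs_def by simp
      qed
      also have "\<dots> = (\<Sum>j\<le>Suc N. cs j * e^j)"
        using bN by (simp add: cs_def)
      also have "\<dots> = (\<Sum>j\<le>N. 2 * deriv (\<beta> j) x * e^Suc j)"
        by (subst sum.atMost_Suc_shift) (simp add: cs_def)
      also have "\<dots> = 2 * e * deriv A x"
        unfolding dA by (simp add: sum_distrib_left algebra_simps)
      finally show ?thesis .
    qed
    have Q: "opQhat N \<beta> \<alpha> e g = (\<lambda>x. A x * deriv g x + B x * g x)" for g
      unfolding opQhat_def A_def B_def by simp
    have "(\<lambda>x. schrL V (opQhat N \<beta> \<alpha> e \<psi>) x + e * opQhat N \<beta> \<alpha> e \<psi> x)
               - opQhat N \<beta> \<alpha> e (\<lambda>x. schrL V \<psi> x + e * \<psi> x)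
        = (\<lambda>x. (2 * deriv A x) * (schrL V \<psi> x + e * \<psi> x))"
      by (rule qhat_identity[OF sV sA sB sp E1 E2 Q])
    also have "\<dots> = (\<lambda>x. r x e * (schrL V \<psi> x + e * \<psi> x))"
      unfolding dA r_def by simp
    finally show ?thesis .
  qed
  show ?thesis
    apply (rule exI[of _ \<beta>], rule exI[of _ \<alpha>], rule exI[of _ r])
    using sa sb bN main by auto
qed


lemma qhat_raw:
  assumes sV: "smooth V" and sA: "smooth A" and sB: "smooth B" and sp: "smooth \<psi>"
    and Q: "\<And>g. Q g = (\<lambda>x. A x * deriv g x + B x * g x)"
  shows "((\<lambda>x. schrL V (Q \<psi>) x + e * Q \<psi> x) - Q (\<lambda>x. schrL V \<psi> x + e * \<psi> x)) x
      = 2 * deriv A x * schrL V \<psi> x + (deriv (deriv A) x + 2 * deriv B x) * deriv \<psi> x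
      + (deriv (deriv B) x - A x * deriv V x - 2 * deriv A x * V x) * \<psi> x"
proof -
  have sL: "smooth (schrL V \<psi>)" by (rule schrL_smooth[OF sV sp])
  note K = key_identity[OF sB sA sp sV, of x]
  have q1: "Q \<psi> = (\<lambda>x. B x * \<psi> x + A x * deriv \<psi> x)" unfolding Q by (auto simp: add.commute)
  have d: "deriv (\<lambda>x. schrL V \<psi> x + e * \<psi> x) x = deriv (schrL V \<psi>) x + e * deriv \<psi> x"
    using sL sp by (simp add: sm_simps)
  show ?thesis using K unfolding fun_diff_def Q[of "\<lambda>x. schrL V \<psi> x + e * \<psi> x"] d
    unfolding q1 by (simp add: algebra_simps)
qed

lemma pm_vals: "pm x0 m x0 = (if m = 0 then 1 else 0)" "deriv (pm x0 m) x0 = (if m = 1 then 1 else 0)"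
   "deriv (deriv (pm x0 m)) x0 = (if m = 2 then 1 else 0)"
  using Dn_pm_x0[of 0 x0 m] Dn_pm_x0[of 1 x0 m] Dn_pm_x0[of 2 x0 m]
  by (auto simp: Dn_2 Dn_Suc)

lemma dir2:
  assumes sV: "smooth V" and sab: "\<forall>j\<le>N. smooth (a j) \<and> smooth (b j)" and aN: "\<forall>x. a N x = 1"
    and idt: "\<forall>\<epsilon> :: real. \<forall>\<psi>. smooth \<psi> \<longrightarrow>
               (\<lambda>x. schrL V (opQhat N a b \<epsilon> \<psi>) x + \<epsilon> * opQhat N a b \<epsilon> \<psi> x)
               - opQhat N a b \<epsilon> (\<lambda>x. schrL V \<psi> x + \<epsilon> * \<psi> x)
               = (\<lambda>x. r x \<epsilon> * (schrL V \<psi> x + \<epsilon> * \<psi> x))"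
  shows "\<exists>q :: nat \<Rightarrow> real \<Rightarrow> real. (\<forall>j\<le>2*N. smooth (q j)) \<and>
            (\<forall>\<psi>. smooth \<psi> \<longrightarrow> opQ N q (schrL V \<psi>) = schrL V (opQ N q \<psi>))"
proof -
  define \<alpha> where "\<alpha> j = (if j \<le> N then b j else (\<lambda>_::real. 0::real))" for j
  define \<beta> where "\<beta> j = (if j \<le> N then a j else (\<lambda>_::real. 0::real))" for j
  have sa: "smooth (\<alpha> k)" and sb: "smooth (\<beta> k)" for k using sab by (auto simp: \<alpha>_def \<beta>_def)
  have za: "\<alpha> (Suc N) = (\<lambda>_. 0)" and zb: "\<beta> (Suc N) = (\<lambda>_. 0)" by (auto simp: \<alpha>_def \<beta>_def)
  have bN: "\<beta> N = (\<lambda>x. 1)" using aN by (auto simp: \<beta>_def)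
  define AA where "AA k x = (case k of 0 \<Rightarrow> 0 | Suc j \<Rightarrow> 2 * deriv (\<beta> j) x)
         - (deriv (deriv (\<alpha> k)) x - \<beta> k x * deriv V x - 2 * deriv (\<beta> k) x * V x)" for k x
  define BB where "BB k x = - (deriv (deriv (\<beta> k)) x + 2 * deriv (\<alpha> k) x)" for k x
  have zz: "AA k x0 = 0 \<and> BB k x0 = 0" if kN: "k \<le> Suc N" for k x0
  proof -
    define A where "A e x = (\<Sum>j\<le>Suc N. \<beta> j x * e^j)" for e x :: real
    define B where "B e x = (\<Sum>j\<le>Suc N. \<alpha> j x * e^j)" for e x :: real
    have sA: "smooth (A e)" for e unfolding A_def by (rule smooth_poly) (rule sb)
    have sB: "smooth (B e)" for e unfolding B_def by (rule smooth_poly) (rule sa)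
    have dA: "deriv (A e) = (\<lambda>x. \<Sum>j\<le>Suc N. deriv (\<beta> j) x * e^j)" for e unfolding A_def by (rule deriv_poly) (rule sb)
    have ddA: "deriv (deriv (A e)) = (\<lambda>x. \<Sum>j\<le>Suc N. deriv (deriv (\<beta> j)) x * e^j)" for e unfolding dA by (rule deriv_poly) (rule smooth_deriv[OF sb])
    have dB: "deriv (B e) = (\<lambda>x. \<Sum>j\<le>Suc N. deriv (\<alpha> j) x * e^j)" for e unfolding B_def by (rule deriv_poly) (rule sa)
    have ddB: "deriv (deriv (B e)) = (\<lambda>x. \<Sum>j\<le>Suc N. deriv (deriv (\<alpha> j)) x * e^j)" for e unfolding dB by (rule deriv_poly) (rule smooth_deriv[OF sa])
    have Q: "opQhat N a b e g = (\<lambda>x. A e x * deriv g x + B e x * g x)" for e g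
    proof -
      have "(\<Sum>j\<le>N. a j x * e^j) = A e x" "(\<Sum>j\<le>N. b j x * e^j) = B e x" for x
        unfolding A_def B_def \<alpha>_def \<beta>_def by (auto intro!: sum.cong)
      then show ?thesis unfolding opQhat_def by simp
    qed
    have ev: "2 * deriv (A e) x0 * schrL V (pm x0 m) x0 + (deriv (deriv (A e)) x0 + 2 * deriv (B e) x0) * deriv (pm x0 m) x0
      + (deriv (deriv (B e)) x0 - A e x0 * deriv V x0 - 2 * deriv (A e) x0 * V x0) * pm x0 m x0
      = r x0 e * (schrL V (pm x0 m) x0 + e * pm x0 m x0)" for e m
    proof -
      have "((\<lambda>x. schrL V (opQhat N a b e (pm x0 m)) x + e * opQhat N a b e (pm x0 m) x)
               - opQhat N a b e (\<lambda>x. schrL V (pm x0 m) x + e * pm x0 m x)) x0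
            = r x0 e * (schrL V (pm x0 m) x0 + e * pm x0 m x0)"
        using idt smooth_pm by simp
      then show ?thesis unfolding qhat_raw[OF sV sA sB smooth_pm Q] .
    qed
    have sL: "schrL V (pm x0 m) x0 = deriv (deriv (pm x0 m)) x0 + V x0 * pm x0 m x0" for m
      by (simp add: schrL_def Dn_2)
    have E1: "deriv (deriv (A e)) x0 + 2 * deriv (B e) x0 = 0" for e
      using ev[of e 1] by (simp add: sL pm_vals)
    have r2: "r x0 e = 2 * deriv (A e) x0" for e
      using ev[of e 2] by (simp add: sL pm_vals)
    have E2: "deriv (deriv (B e)) x0 - A e x0 * deriv V x0 - 2 * deriv (A e) x0 * V x0 = 2 * e * deriv (A e) x0" for e
      using ev[of e 0] r2[of e] by (simp add: sL pm_vals algebra_simps)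
    have "\<forall>e. (\<Sum>j\<le>Suc N. (- BB j x0) * e^j) = 0"
    proof
      fix e :: real
      have "(\<Sum>j\<le>Suc N. (- BB j x0) * e^j) = deriv (deriv (A e)) x0 + 2 * deriv (B e) x0"
        unfolding ddA dB BB_def by (simp add: sum_distrib_left sum.distrib[symmetric] algebra_simps)
      then show "(\<Sum>j\<le>Suc N. (- BB j x0) * e^j) = 0" using E1 by simp
    qed
    then have B0: "BB k x0 = 0" using kN polyfun_eq_0[of "\<lambda>j. - BB j x0" "Suc N"] by auto
    define cs where "cs j = (case j of 0 \<Rightarrow> 0 | Suc i \<Rightarrow> 2 * deriv (\<beta> i) x0)" for j
    have "\<forall>e. (\<Sum>j\<le>Suc N. (- AA j x0) * e^j) = 0"
    proof
      fix e :: real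
      have s1: "deriv (deriv (B e)) x0 - A e x0 * deriv V x0 - 2 * deriv (A e) x0 * V x0
         = (\<Sum>j\<le>Suc N. (deriv (deriv (\<alpha> j)) x0 - \<beta> j x0 * deriv V x0 - 2 * deriv (\<beta> j) x0 * V x0) * e^j)"
        unfolding ddB dA A_def by (simp add: sum_distrib_left sum_distrib_right sum_subtractf[symmetric] algebra_simps)
      have "2 * e * deriv (A e) x0 = (\<Sum>j\<le>Suc N. 2 * deriv (\<beta> j) x0 * e^Suc j)"
        unfolding dA by (simp add: sum_distrib_left algebra_simps)
      also have "\<dots> = (\<Sum>j\<le>Suc (Suc N). cs j * e^j)"
        by (subst sum.atMost_Suc_shift) (simp add: cs_def)
      also have "\<dots> = (\<Sum>j\<le>Suc N. cs j * e^j)"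
        using zb by (simp add: cs_def)
      finally have s2: "2 * e * deriv (A e) x0 = (\<Sum>j\<le>Suc N. cs j * e^j)" .
      have "(\<Sum>j\<le>Suc N. (- AA j x0) * e^j) = (\<Sum>j\<le>Suc N. (deriv (deriv (\<alpha> j)) x0 - \<beta> j x0 * deriv V x0 - 2 * deriv (\<beta> j) x0 * V x0) * e^j)
          - (\<Sum>j\<le>Suc N. cs j * e^j)"
      proof -
        have "(\<Sum>j\<le>Suc N. (- AA j x0) * e^j) = (\<Sum>j\<le>Suc N. (deriv (deriv (\<alpha> j)) x0 - \<beta> j x0 * deriv V x0 - 2 * deriv (\<beta> j) x0 * V x0) * e^j - cs j * e^j)"
          by (rule sum.cong[OF refl]) (simp add: AA_def cs_def algebra_simps)
        then show ?thesis by (simp add: sum_subtractf)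
      qed
      then show "(\<Sum>j\<le>Suc N. (- AA j x0) * e^j) = 0" using E2[of e] s1 s2 by simp
    qed
    then have A0: "AA k x0 = 0" using kN polyfun_eq_0[of "\<lambda>j. - AA j x0" "Suc N"] by auto
    show ?thesis using A0 B0 by simp
  qed
  obtain c where c: "repr (Suc (2*N)) c (DO V N \<alpha> \<beta>)" "c (Suc (2*N)) = (\<lambda>x. (-1)^N * \<beta> N x)"
    using repr_DO[where a=\<alpha> and b=\<beta> and M=N, OF sV sa sb] by blast
  define q where "q j x = (-1)^N * c j x" for j x
  have sq: "smooth (q j)" for j unfolding q_def[abs_def] using repr_sm[OF c(1)] by (rule smooth_cmult)
  have opQ_eq: "opQ N q \<psi> = (\<lambda>x. (-1)^N * DO V N \<alpha> \<beta> \<psi> x)" if sp: "smooth \<psi>" for \<psi>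
  proof
    fix x
    have "DO V N \<alpha> \<beta> \<psi> x = (\<Sum>i\<le>2*N. c i x * Dn i \<psi> x) + (-1)^N * Dn (Suc (2*N)) \<psi> x"
      using repr_eq[OF c(1) sp, of x] c(2) bN by simp
    then show "opQ N q \<psi> x = (-1)^N * DO V N \<alpha> \<beta> \<psi> x"
      unfolding opQ_def q_def using m1sq[of N]
      by (simp add: distrib_left sum_distrib_left mult.assoc[symmetric])
  qed
  have comm: "opQ N q (schrL V \<psi>) = schrL V (opQ N q \<psi>)" if sp: "smooth \<psi>" for \<psi>
  proof -
    have sL: "smooth (schrL V \<psi>)" by (rule schrL_smooth[OF sV sp])
    have sN: "smooth (nL V \<psi>)" by (rule nL_smooth[OF sV sp])
    have sD: "smooth (DO V N \<alpha> \<beta> \<psi>)" by (rule repr_smooth[OF c(1) sp])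
    have H: "nL V (DO V N \<alpha> \<beta> \<psi>) x - DO V N \<alpha> \<beta> (nL V \<psi>) x = 0" for x
    proof -
      have "nL V (DO V N \<alpha> \<beta> \<psi>) x - DO V N \<alpha> \<beta> (nL V \<psi>) x = (\<Sum>k\<le>Suc N. AA k x * P V k \<psi> x + BB k x * deriv (P V k \<psi>) x)"
        unfolding AA_def BB_def by (rule comm_DO[of V \<alpha> \<beta> \<psi> N x, OF sV sa sb sp za zb])
      also have "\<dots> = 0" using zz by (intro sum.neutral) auto
      finally show ?thesis .
    qed
    have "opQ N q (schrL V \<psi>) = (\<lambda>x. (-1)^N * DO V N \<alpha> \<beta> (schrL V \<psi>) x)" by (rule opQ_eq[OF sL])
    also have "DO V N \<alpha> \<beta> (schrL V \<psi>) = (\<lambda>x. - DO V N \<alpha> \<beta> (nL V \<psi>) x)"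
      unfolding schrL_nL[of V \<psi>] by (rule repr_neg[OF c(1) sN])
    also have "(\<lambda>x. - DO V N \<alpha> \<beta> (nL V \<psi>) x) = (\<lambda>x. - nL V (DO V N \<alpha> \<beta> \<psi>) x)"
      using H by (auto simp: algebra_simps)
    also have "\<dots> = schrL V (DO V N \<alpha> \<beta> \<psi>)" by (simp add: schrL_nL)
    finally have "opQ N q (schrL V \<psi>) = (\<lambda>x. (-1)^N * schrL V (DO V N \<alpha> \<beta> \<psi>) x)" .
    also have "\<dots> = schrL V (\<lambda>x. (-1)^N * DO V N \<alpha> \<beta> \<psi> x)" by (rule schrL_cmult[OF sD, symmetric])
    also have "\<dots> = schrL V (opQ N q \<psi>)" using opQ_eq[OF sp] by simp
    finally show ?thesis .
  qed
  show ?thesis using sq comm by (intro exI[of _ q]) auto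
qed

theorem lemma1:
  fixes V :: "real \<Rightarrow> real" and N :: nat
  assumes "smooth V"
  shows "(\<exists>q :: nat \<Rightarrow> real \<Rightarrow> real. (\<forall>j\<le>2*N. smooth (q j)) \<and>
            (\<forall>\<psi>. smooth \<psi> \<longrightarrow> opQ N q (schrL V \<psi>) = schrL V (opQ N q \<psi>)))
     \<longleftrightarrow>
         (\<exists>(a :: nat \<Rightarrow> real \<Rightarrow> real) (b :: nat \<Rightarrow> real \<Rightarrow> real) (r :: real \<Rightarrow> real \<Rightarrow> real).
            (\<forall>j\<le>N. smooth (a j) \<and> smooth (b j)) \<and> (\<forall>x. a N x = 1) \<and>
            (\<forall>\<epsilon> :: real. \<forall>\<psi>. smooth \<psi> \<longrightarrow>
               (\<lambda>x. schrL V (opQhat N a b \<epsilon> \<psi>) x + \<epsilon> * opQhat N a b \<epsilon> \<psi> x)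
               - opQhat N a b \<epsilon> (\<lambda>x. schrL V \<psi> x + \<epsilon> * \<psi> x)
               = (\<lambda>x. r x \<epsilon> * (schrL V \<psi> x + \<epsilon> * \<psi> x))))"
proof
  assume "\<exists>q :: nat \<Rightarrow> real \<Rightarrow> real. (\<forall>j\<le>2*N. smooth (q j)) \<and>
            (\<forall>\<psi>. smooth \<psi> \<longrightarrow> opQ N q (schrL V \<psi>) = schrL V (opQ N q \<psi>))"
  then obtain q :: "nat \<Rightarrow> real \<Rightarrow> real" where q: "\<forall>j\<le>2*N. smooth (q j)"
    "\<forall>\<psi>. smooth \<psi> \<longrightarrow> opQ N q (schrL V \<psi>) = schrL V (opQ N q \<psi>)" by blast
  show "\<exists>(a :: nat \<Rightarrow> real \<Rightarrow> real) (b :: nat \<Rightarrow> real \<Rightarrow> real) (r :: real \<Rightarrow> real \<Rightarrow> real).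
            (\<forall>j\<le>N. smooth (a j) \<and> smooth (b j)) \<and> (\<forall>x. a N x = 1) \<and>
            (\<forall>\<epsilon> :: real. \<forall>\<psi>. smooth \<psi> \<longrightarrow>
               (\<lambda>x. schrL V (opQhat N a b \<epsilon> \<psi>) x + \<epsilon> * opQhat N a b \<epsilon> \<psi> x)
               - opQhat N a b \<epsilon> (\<lambda>x. schrL V \<psi> x + \<epsilon> * \<psi> x)
               = (\<lambda>x. r x \<epsilon> * (schrL V \<psi> x + \<epsilon> * \<psi> x)))"
    by (rule dir1[OF assms q(1) q(2)])
next
  assume "\<exists>(a :: nat \<Rightarrow> real \<Rightarrow> real) (b :: nat \<Rightarrow> real \<Rightarrow> real) (r :: real \<Rightarrow> real \<Rightarrow> real).
            (\<forall>j\<le>N. smooth (a j) \<and> smooth (b j)) \<and> (\<forall>x. a N x = 1) \<and>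
            (\<forall>\<epsilon> :: real. \<forall>\<psi>. smooth \<psi> \<longrightarrow>
               (\<lambda>x. schrL V (opQhat N a b \<epsilon> \<psi>) x + \<epsilon> * opQhat N a b \<epsilon> \<psi> x)
               - opQhat N a b \<epsilon> (\<lambda>x. schrL V \<psi> x + \<epsilon> * \<psi> x)
               = (\<lambda>x. r x \<epsilon> * (schrL V \<psi> x + \<epsilon> * \<psi> x)))"
  then obtain a b :: "nat \<Rightarrow> real \<Rightarrow> real" and r :: "real \<Rightarrow> real \<Rightarrow> real" where abr:
    "\<forall>j\<le>N. smooth (a j) \<and> smooth (b j)" "\<forall>x. a N x = 1"
    "\<forall>\<epsilon> :: real. \<forall>\<psi>. smooth \<psi> \<longrightarrow>
               (\<lambda>x. schrL V (opQhat N a b \<epsilon> \<psi>) x + \<epsilon> * opQhat N a b \<epsilon> \<psi> x)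
               - opQhat N a b \<epsilon> (\<lambda>x. schrL V \<psi> x + \<epsilon> * \<psi> x)
               = (\<lambda>x. r x \<epsilon> * (schrL V \<psi> x + \<epsilon> * \<psi> x))" by blast
  show "\<exists>q :: nat \<Rightarrow> real \<Rightarrow> real. (\<forall>j\<le>2*N. smooth (q j)) \<and>
            (\<forall>\<psi>. smooth \<psi> \<longrightarrow> opQ N q (schrL V \<psi>) = schrL V (opQ N q \<psi>))"
    by (rule dir2[OF assms abr(1) abr(2) abr(3)])
qed

end
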